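(* Let $\{(X_i,W_i,Y_i)\}_{i=1}^n$ be an i.i.d. sample from a randomized experiment with treatment arms $\mathcal W=\{1,\dots,K\}$, $Y_i=Y_i(W_i)$, $(Y(1),\dots,Y(K),X)$ independent of $W$, and $0<\pi_w=P(W=w)<1$. Let $n_w=\#\{i:W_i=w\}$ and suppose $n_w/n=\pi_w+o(1)$ as $n\to\infty$ for every $w\in\mathcal W$. For $y\in\mathcal Y$ define the simple estimator $\hat F^{simple}_{Y(w)}(y)=\frac{1}{n_w}\sum_{i:W_i=w}1\{Y_i\le y\}$, and the (infeasible) regression-adjusted estimator using the true conditional distribution $\gamma_y^{(w)}(x)=F_{Y(w)\mid X}(y\mid x)$: $$\tilde F_{Y(w)}(y)=\frac{1}{n_w}\sum_{i:W_i=w}\big(1\{Y_i\le y\}-\gamma_y^{(w)}(X_i)\big)+\frac1n\sum_{i=1}^n\gamma_y^{(w)}(X_i).$$ Let $\hat\theta^{simple}_y=(\hat F^{simple}_{Y(w)}(y))_{w=1}^K$ and $\tilde\theta_y=(\tilde F_{Y(w)}(y))_{w=1}^K$. Then: (a) for any $w\in\mathcal W$ and $y\in\mathcal Y$, $\mathrm{Var}(\hat F^{simple}_{Y(w)}(y))\ge\mathrm{Var}(\tilde F_{Y(w)}(y))+o(n^{-1})$, where equality holds only if $F_{Y(w)\mid X}(y\mid X)=F_{Y(w)}(y)$; (b) for any $y\in\mathcal Y$, $\mathrm{Var}(\hat\theta^{simple}_y)\succeq\mathrm{Var}(\tilde\theta_y)+o(n^{-1})$; moreover, if $\mathrm{Var}\big(F_{Y(w)\mid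 X}(y\mid X)-r\,F_{Y(w')\mid X}(y\mid X)\big)>0$ for all distinct $w,w'\in\mathcal W$ and all $r\in\mathbb R$, then the positive definite version of this ordering holds.
   Context: $1\{\cdot\}$ is the indicator function; $A\succeq B$ means $A-B$ is positive semi-definite; $F_{Y(w)}(y)=P(Y(w)\le y)$. *)

theory Defs
  imports "HOL-Probability.Probability" "HOL-Library.Landau_Symbols"
begin

definition covariance :: "'a measure \<Rightarrow> ('a \<Rightarrow> real) \<Rightarrow> ('a \<Rightarrow> real) \<Rightarrow> real" where
  "covariance M f g =
     (\<integral>\<omega>. (f \<omega> - (\<integral>\<omega>'. f \<omega>' \<partial>M)) * (g \<omega> - (\<integral>\<omega>'. g \<omega>' \<partial>M)) \<partial>M)"

definition Var :: "'a measure \<Rightarrow> ('a \<Rightarrow> real) \<Rightarrow> real" where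
  "Var M f = (\<integral>\<omega>. (f \<omega> - (\<integral>\<omega>'. f \<omega>' \<partial>M))\<^sup>2 \<partial>M)"

definition cov_matrix :: "'a measure \<Rightarrow> ('a \<Rightarrow> real ^ 'w) \<Rightarrow> real ^ 'w ^ 'w" where
  "cov_matrix M \<theta> = (\<chi> w w'. covariance M (\<lambda>\<omega>. \<theta> \<omega> $ w) (\<lambda>\<omega>. \<theta> \<omega> $ w'))"

text \<open>Positive semi-definiteness (A \<succeq> B means psd (A - B)).\<close>
definition psd :: "real ^ 'n ^ 'n \<Rightarrow> bool" where
  "psd A \<longleftrightarrow> (\<forall>v. 0 \<le> v \<bullet> (A *v v))"

text \<open>g is a version of the conditional distribution function x \<mapsto> F_{V|X}(y|x), i.e.
  g(X) is a version of E[1{V \<le> y} | X].\<close>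
definition cond_cdf_version ::
  "'a measure \<Rightarrow> 'x measure \<Rightarrow> ('a \<Rightarrow> 'x) \<Rightarrow> ('a \<Rightarrow> real) \<Rightarrow> real \<Rightarrow> ('x \<Rightarrow> real) \<Rightarrow> bool" where
  "cond_cdf_version M Sx X V y g \<longleftrightarrow>
     g \<in> borel_measurable Sx \<and> integrable M (\<lambda>\<omega>. g (X \<omega>)) \<and>
     (\<forall>A\<in>sets Sx. (\<integral>\<omega>. indicator {..y} (V \<omega>) * indicator A (X \<omega>) \<partial>M)
                  = (\<integral>\<omega>. g (X \<omega>) * indicator A (X \<omega>) \<partial>M))"

text \<open>Number of units among the first n assigned to arm w (assignment a n i of unit i).\<close>
definition n_arm :: "(nat \<Rightarrow> nat \<Rightarrow> 'w) \<Rightarrow> nat \<Rightarrow> 'w \<Rightarrow> nat" where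
  "n_arm a n w = card {i. i < n \<and> a n i = w}"

text \<open>Simple estimator; the observed outcome of unit i is Y i (a n i).\<close>
definition F_simple :: "(nat \<Rightarrow> 'w \<Rightarrow> 'a \<Rightarrow> real) \<Rightarrow> (nat \<Rightarrow> nat \<Rightarrow> 'w) \<Rightarrow> real
    \<Rightarrow> nat \<Rightarrow> 'w \<Rightarrow> 'a \<Rightarrow> real" where
  "F_simple Y a y n w \<omega> =
     (1 / real (n_arm a n w)) * (\<Sum>i | i < n \<and> a n i = w. indicator {..y} (Y i (a n i) \<omega>))"

definition F_tilde :: "(nat \<Rightarrow> 'a \<Rightarrow> 'x) \<Rightarrow> (nat \<Rightarrow> 'w \<Rightarrow> 'a \<Rightarrow> real) \<Rightarrow> (nat \<Rightarrow> nat \<Rightarrow> 'w)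
    \<Rightarrow> ('w \<Rightarrow> real \<Rightarrow> 'x \<Rightarrow> real) \<Rightarrow> real \<Rightarrow> nat \<Rightarrow> 'w \<Rightarrow> 'a \<Rightarrow> real" where
  "F_tilde X Y a \<gamma> y n w \<omega> =
     (1 / real (n_arm a n w)) *
       (\<Sum>i | i < n \<and> a n i = w. indicator {..y} (Y i (a n i) \<omega>) - \<gamma> w y (X i \<omega>))
     + (1 / real n) * (\<Sum>i<n. \<gamma> w y (X i \<omega>))"

definition theta_simple :: "(nat \<Rightarrow> 'w \<Rightarrow> 'a \<Rightarrow> real) \<Rightarrow> (nat \<Rightarrow> nat \<Rightarrow> 'w) \<Rightarrow> real
    \<Rightarrow> nat \<Rightarrow> 'a \<Rightarrow> real ^ 'w" where
  "theta_simple Y a y n \<omega> = (\<chi> w. F_simple Y a y n w \<omega>)"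

definition theta_tilde :: "(nat \<Rightarrow> 'a \<Rightarrow> 'x) \<Rightarrow> (nat \<Rightarrow> 'w \<Rightarrow> 'a \<Rightarrow> real) \<Rightarrow> (nat \<Rightarrow> nat \<Rightarrow> 'w)
    \<Rightarrow> ('w \<Rightarrow> real \<Rightarrow> 'x \<Rightarrow> real) \<Rightarrow> real \<Rightarrow> nat \<Rightarrow> 'a \<Rightarrow> real ^ 'w" where
  "theta_tilde X Y a \<gamma> y n \<omega> = (\<chi> w. F_tilde X Y a \<gamma> y n w \<omega>)"

end

theory Submission
  imports Defs
begin

definition bdd_rv :: "'a measure \<Rightarrow> ('a \<Rightarrow> real) \<Rightarrow> bool" where
  "bdd_rv M f \<longleftrightarrow> f \<in> borel_measurable M \<and> (\<exists>B. \<forall>\<omega>\<in>space M. \<bar>f \<omega>\<bar> \<le> B)"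

lemma bdd_rv_const: "bdd_rv M (\<lambda>_. c)"
  unfolding bdd_rv_def by auto

lemma bdd_rv_add: "bdd_rv M f \<Longrightarrow> bdd_rv M g \<Longrightarrow> bdd_rv M (\<lambda>x. f x + g x)"
  unfolding bdd_rv_def
proof (elim conjE exE, intro conjI)
  fix B C assume "\<forall>\<omega>\<in>space M. \<bar>f \<omega>\<bar> \<le> B" "\<forall>\<omega>\<in>space M. \<bar>g \<omega>\<bar> \<le> C"
  then show "\<exists>B. \<forall>\<omega>\<in>space M. \<bar>f \<omega> + g \<omega>\<bar> \<le> B"
    by (intro exI[of _ "B + C"]) (smt (verit))
qed auto

lemma bdd_rv_mult: "bdd_rv M f \<Longrightarrow> bdd_rv M g \<Longrightarrow> bdd_rv M (\<lambda>x. f x * g x)"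
  unfolding bdd_rv_def
proof (elim conjE exE, intro conjI)
  fix B C assume "\<forall>\<omega>\<in>space M. \<bar>f \<omega>\<bar> \<le> B" "\<forall>\<omega>\<in>space M. \<bar>g \<omega>\<bar> \<le> C"
  then show "\<exists>B. \<forall>\<omega>\<in>space M. \<bar>f \<omega> * g \<omega>\<bar> \<le> B"
    by (intro exI[of _ "B * C"]) (auto simp: abs_mult intro!: mult_mono)
qed auto

lemma bdd_rv_diff: "bdd_rv M f \<Longrightarrow> bdd_rv M g \<Longrightarrow> bdd_rv M (\<lambda>x. f x - g x)"
  using bdd_rv_add[of M f "\<lambda>x. (-1) * g x"] bdd_rv_mult[OF bdd_rv_const[of M "-1"], of g] by simp

lemma bdd_rv_cmult: "bdd_rv M f \<Longrightarrow> bdd_rv M (\<lambda>x. c * f x)"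
  using bdd_rv_mult[OF bdd_rv_const] by blast

lemma bdd_rv_sum: "(\<And>i. i \<in> I \<Longrightarrow> bdd_rv M (f i)) \<Longrightarrow> bdd_rv M (\<lambda>x. \<Sum>i\<in>I. f i x)"
proof (induction I rule: infinite_finite_induct)
  case (infinite A) then show ?case by (simp add: bdd_rv_const)
next
  case empty then show ?case by (simp add: bdd_rv_const)
next
  case (insert x F) then show ?case by (simp add: bdd_rv_add)
qed

lemma bdd_rv_compose:
  assumes "Z \<in> measurable M S" "F \<in> borel_measurable S" "\<And>p. p \<in> space S \<Longrightarrow> \<bar>F p\<bar> \<le> B"
  shows "bdd_rv M (\<lambda>\<omega>. F (Z \<omega>))"
  unfolding bdd_rv_def using assms measurable_space[OF assms(1)] by auto

context prob_space begin

lemma bdd_rv_integrable: "bdd_rv M f \<Longrightarrow> integrable M f"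
proof -
  assume "bdd_rv M f"
  then obtain B where "f \<in> borel_measurable M" "\<forall>\<omega>\<in>space M. \<bar>f \<omega>\<bar> \<le> B"
    unfolding bdd_rv_def by blast
  then show "integrable M f" by (intro integrable_const_bound[where B=B]) auto
qed

lemma cov_alt:
  assumes "bdd_rv M f" "bdd_rv M g"
  shows "covariance M f g = expectation (\<lambda>x. f x * g x) - expectation f * expectation g"
proof -
  have i: "integrable M f" "integrable M g" "integrable M (\<lambda>x. f x * g x)"
    using assms bdd_rv_mult bdd_rv_integrable by blast+
  let ?a = "expectation f" and ?b = "expectation g"
  have "(\<lambda>x. (f x - ?a) * (g x - ?b)) = (\<lambda>x. f x * g x - (?b * f x + ?a * g x) + ?a * ?b)"
    by (auto simp: algebra_simps)
  then have "covariance M f g = expectation (\<lambda>x. f x * g x - (?b * f x + ?a * g x) + ?a * ?b)"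
    unfolding covariance_def by simp
  also have "\<dots> = expectation (\<lambda>x. f x * g x) - (?b * ?a + ?a * ?b) + ?a * ?b"
    using i prob_space by (simp add: Bochner_Integration.integral_add Bochner_Integration.integral_diff)
  finally show ?thesis by simp
qed

lemma Var_cov: "Var M f = covariance M f f"
  unfolding Var_def covariance_def by (simp add: power2_eq_square)

lemma cov_sym: "covariance M f g = covariance M g f"
  unfolding covariance_def by (simp add: mult.commute)

lemma cov_sum_sum:
  assumes "finite I" "finite J" "\<And>i. i \<in> I \<Longrightarrow> bdd_rv M (f i)" "\<And>j. j \<in> J \<Longrightarrow> bdd_rv M (g j)"
  shows "covariance M (\<lambda>x. \<Sum>i\<in>I. f i x) (\<lambda>x. \<Sum>j\<in>J. g j x)
       = (\<Sum>i\<in>I. \<Sum>j\<in>J. covariance M (f i) (g j))"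
proof -
  have bf: "bdd_rv M (\<lambda>x. \<Sum>i\<in>I. f i x)" and bg: "bdd_rv M (\<lambda>x. \<Sum>j\<in>J. g j x)"
    using assms by (auto intro: bdd_rv_sum)
  have ii: "\<And>i j. i \<in> I \<Longrightarrow> j \<in> J \<Longrightarrow> integrable M (\<lambda>x. f i x * g j x)"
    using assms bdd_rv_mult bdd_rv_integrable by blast
  have "expectation (\<lambda>x. (\<Sum>i\<in>I. f i x) * (\<Sum>j\<in>J. g j x)) = expectation (\<lambda>x. \<Sum>i\<in>I. \<Sum>j\<in>J. f i x * g j x)"
    by (simp add: sum_product)
  also have "\<dots> = (\<Sum>i\<in>I. \<Sum>j\<in>J. expectation (\<lambda>x. f i x * g j x))"
    using ii by (simp add: Bochner_Integration.integral_sum integrable_sum)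
  finally have e1: "expectation (\<lambda>x. (\<Sum>i\<in>I. f i x) * (\<Sum>j\<in>J. g j x)) = \<dots>" .
  have e2: "expectation (\<lambda>x. \<Sum>i\<in>I. f i x) = (\<Sum>i\<in>I. expectation (f i))"
    using assms bdd_rv_integrable by (simp add: Bochner_Integration.integral_sum)
  have e3: "expectation (\<lambda>x. \<Sum>j\<in>J. g j x) = (\<Sum>j\<in>J. expectation (g j))"
    using assms bdd_rv_integrable by (simp add: Bochner_Integration.integral_sum)
  have "(\<Sum>i\<in>I. \<Sum>j\<in>J. covariance M (f i) (g j))
     = (\<Sum>i\<in>I. \<Sum>j\<in>J. expectation (\<lambda>x. f i x * g j x) - expectation (f i) * expectation (g j))"
    using assms by (intro sum.cong refl) (simp add: cov_alt)
  then show ?thesis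
    unfolding cov_alt[OF bf bg] e1 e2 e3
    by (simp add: sum_product sum_subtractf)
qed

lemma cov_indep:
  assumes ind: "indep_vars (\<lambda>_. S) Z UNIV" and ij: "i \<noteq> j"
    and F: "F \<in> borel_measurable S" "\<And>p. p \<in> space S \<Longrightarrow> \<bar>F p\<bar> \<le> B"
    and G: "G \<in> borel_measurable S" "\<And>p. p \<in> space S \<Longrightarrow> \<bar>G p\<bar> \<le> C"
  shows "covariance M (\<lambda>\<omega>. F (Z i \<omega>)) (\<lambda>\<omega>. G (Z j \<omega>)) = 0"
proof -
  have Zm: "\<And>k. Z k \<in> measurable M S" using ind unfolding indep_vars_def by auto
  let ?H = "\<lambda>k. if k = i then F else G"
  have ind2: "indep_vars (\<lambda>_. borel) (\<lambda>k \<omega>. ?H k (Z k \<omega>)) {i, j}"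
    by (rule indep_vars_compose2[OF indep_vars_subset[OF ind]]) (use F G in auto)
  have bF: "bdd_rv M (\<lambda>\<omega>. F (Z i \<omega>))" by (rule bdd_rv_compose[OF Zm F])
  have bG: "bdd_rv M (\<lambda>\<omega>. G (Z j \<omega>))" by (rule bdd_rv_compose[OF Zm G])
  have "(\<integral>\<omega>. (\<Prod>k\<in>{i,j}. ?H k (Z k \<omega>)) \<partial>M) = (\<Prod>k\<in>{i,j}. \<integral>\<omega>. ?H k (Z k \<omega>) \<partial>M)"
    by (rule indep_vars_lebesgue_integral[OF _ ind2]) (use bF bG bdd_rv_integrable in auto)
  then have "expectation (\<lambda>\<omega>. F (Z i \<omega>) * G (Z j \<omega>)) = expectation (\<lambda>\<omega>. F (Z i \<omega>)) * expectation (\<lambda>\<omega>. G (Z j \<omega>))"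
    using ij by simp
  then show ?thesis by (simp add: cov_alt[OF bF bG])
qed

lemma cov_distr:
  assumes Z: "Z \<in> measurable M S" and F: "F \<in> borel_measurable S" and G: "G \<in> borel_measurable S"
  shows "covariance M (\<lambda>\<omega>. F (Z \<omega>)) (\<lambda>\<omega>. G (Z \<omega>)) = covariance (distr M S Z) F G"
  unfolding covariance_def using assms
  by (subst integral_distr[OF Z]) (auto simp: integral_distr[OF Z])

lemma cov_lin2:
  assumes "bdd_rv M f" "bdd_rv M g" "bdd_rv M f'" "bdd_rv M g'"
  shows "covariance M (\<lambda>x. s * f x + t * g x) (\<lambda>x. s' * f' x + t' * g' x)
    = s * s' * covariance M f f' + s * t' * covariance M f g' + t * s' * covariance M g f' + t * t' * covariance M g g'"
proof -
  have "covariance M (\<lambda>x. s * f x + t * g x) (\<lambda>x. s' * f' x + t' * g' x)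
     = covariance M (\<lambda>x. \<Sum>i\<in>{True,False}. (if i then s * f x else t * g x))
                    (\<lambda>x. \<Sum>j\<in>{True,False}. (if j then s' * f' x else t' * g' x))"
    by simp
  also have "\<dots> = (\<Sum>i\<in>{True,False}. \<Sum>j\<in>{True,False}.
       covariance M (\<lambda>x. if i then s * f x else t * g x) (\<lambda>x. if j then s' * f' x else t' * g' x))"
    apply (rule cov_sum_sum)
       apply simp
      apply simp
    subgoal for i by (cases i) (simp_all add: assms bdd_rv_cmult)
    subgoal for i by (cases i) (simp_all add: assms bdd_rv_cmult)
    done
  also have "\<dots> = s * s' * covariance M f f' + s * t' * covariance M f g' + t * s' * covariance M g f' + t * t' * covariance M g g'"
    using assms
    by (simp add: cov_alt bdd_rv_cmult algebra_simps)
  finally show ?thesis .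
qed

lemma cov_units:
  fixes n :: nat
  assumes ind: "indep_vars (\<lambda>_. S) Z UNIV" and dist: "\<And>i. distr M S (Z i) = distr M S (Z 0)"
    and F: "\<And>i. F i \<in> borel_measurable S" "\<And>i. \<exists>B. \<forall>p\<in>space S. \<bar>F i p\<bar> \<le> B"
    and G: "\<And>i. G i \<in> borel_measurable S" "\<And>i. \<exists>B. \<forall>p\<in>space S. \<bar>G i p\<bar> \<le> B"
  shows "covariance M (\<lambda>\<omega>. \<Sum>i<n. F i (Z i \<omega>)) (\<lambda>\<omega>. \<Sum>j<n. G j (Z j \<omega>))
       = (\<Sum>i<n. covariance M (\<lambda>\<omega>. F i (Z 0 \<omega>)) (\<lambda>\<omega>. G i (Z 0 \<omega>)))"
proof -
  have Zm: "\<And>k. Z k \<in> measurable M S" using ind unfolding indep_vars_def by auto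
  have bF: "\<And>i. bdd_rv M (\<lambda>\<omega>. F i (Z i \<omega>))"
  proof -
    fix i obtain B where "\<forall>p\<in>space S. \<bar>F i p\<bar> \<le> B" using F(2) by blast
    then show "bdd_rv M (\<lambda>\<omega>. F i (Z i \<omega>))" by (intro bdd_rv_compose[OF Zm F(1)]) auto
  qed
  have bG: "\<And>i. bdd_rv M (\<lambda>\<omega>. G i (Z i \<omega>))"
  proof -
    fix i obtain B where "\<forall>p\<in>space S. \<bar>G i p\<bar> \<le> B" using G(2) by blast
    then show "bdd_rv M (\<lambda>\<omega>. G i (Z i \<omega>))" by (intro bdd_rv_compose[OF Zm G(1)]) auto
  qed
  have "covariance M (\<lambda>\<omega>. \<Sum>i<n. F i (Z i \<omega>)) (\<lambda>\<omega>. \<Sum>j<n. G j (Z j \<omega>))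
      = (\<Sum>i<n. \<Sum>j<n. covariance M (\<lambda>\<omega>. F i (Z i \<omega>)) (\<lambda>\<omega>. G j (Z j \<omega>)))"
    by (rule cov_sum_sum) (auto intro: bF bG)
  also have "\<dots> = (\<Sum>i<n. \<Sum>j<n. if j = i then covariance M (\<lambda>\<omega>. F i (Z i \<omega>)) (\<lambda>\<omega>. G i (Z i \<omega>)) else 0)"
  proof (intro sum.cong refl)
    fix i j
    show "covariance M (\<lambda>\<omega>. F i (Z i \<omega>)) (\<lambda>\<omega>. G j (Z j \<omega>))
      = (if j = i then covariance M (\<lambda>\<omega>. F i (Z i \<omega>)) (\<lambda>\<omega>. G i (Z i \<omega>)) else 0)"
    proof (cases "j = i")
      case False
      obtain B where B: "\<forall>p\<in>space S. \<bar>F i p\<bar> \<le> B" using F(2) by blast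
      obtain C where C: "\<forall>p\<in>space S. \<bar>G j p\<bar> \<le> C" using G(2) by blast
      have "covariance M (\<lambda>\<omega>. F i (Z i \<omega>)) (\<lambda>\<omega>. G j (Z j \<omega>)) = 0"
        by (rule cov_indep[OF ind, of i j "F i" B "G j" C]) (use False B C F(1) G(1) in auto)
      then show ?thesis using False by simp
    qed simp
  qed
  also have "\<dots> = (\<Sum>i<n. covariance M (\<lambda>\<omega>. F i (Z i \<omega>)) (\<lambda>\<omega>. G i (Z i \<omega>)))"
    by (intro sum.cong refl) (simp only: sum.delta finite_lessThan lessThan_iff if_True)
  also have "\<dots> = (\<Sum>i<n. covariance M (\<lambda>\<omega>. F i (Z 0 \<omega>)) (\<lambda>\<omega>. G i (Z 0 \<omega>)))"
    by (intro sum.cong refl) (subst cov_distr[OF Zm F(1) G(1)], subst dist, subst cov_distr[OF Zm F(1) G(1)], rule refl)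
  finally show ?thesis .
qed

lemma cov_cong_AE:
  assumes "f \<in> borel_measurable M" "f' \<in> borel_measurable M" "g \<in> borel_measurable M" "g' \<in> borel_measurable M"
    and "AE x in M. f x = f' x" "AE x in M. g x = g' x"
  shows "covariance M f g = covariance M f' g'"
proof -
  have e1: "expectation f = expectation f'" using assms by (intro integral_cong_AE) auto
  have e2: "expectation g = expectation g'" using assms by (intro integral_cong_AE) auto
  show ?thesis unfolding covariance_def e1 e2
    using assms by (intro integral_cong_AE) (auto elim: AE_mp)
qed

lemma cov_scale:
  assumes "bdd_rv M f" "bdd_rv M g"
  shows "covariance M (\<lambda>x. s * f x) (\<lambda>x. t * g x) = s * t * covariance M f g"
  using cov_lin2[OF assms(1) assms(1) assms(2) assms(2), of s 0 t 0] by simp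

end

context prob_space begin

lemma cond_orth:
  assumes X: "X \<in> measurable M Sx" and V: "V \<in> borel_measurable M"
    and cc: "cond_cdf_version M Sx X V y g"
    and gb: "\<And>x. x \<in> space Sx \<Longrightarrow> \<bar>g x\<bar> \<le> 1"
    and h: "h \<in> borel_measurable Sx" "\<And>x. x \<in> space Sx \<Longrightarrow> \<bar>h x\<bar> \<le> B"
  shows "expectation (\<lambda>\<omega>. h (X \<omega>) * indicator {..y} (V \<omega>)) = expectation (\<lambda>\<omega>. h (X \<omega>) * g (X \<omega>))"
proof -
  define F where "F = vimage_algebra (space M) X Sx"
  have Xsp: "X \<in> space M \<rightarrow> space Sx" using measurable_space[OF X] by auto
  have sub: "subalgebra M F"
    unfolding subalgebra_def F_def using sets_image_in_sets[OF _ X] by auto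
  interpret fs: finite_measure_subalgebra M F
    by unfold_locales (rule sub)
  have gm: "g \<in> borel_measurable Sx" using cc unfolding cond_cdf_version_def by auto
  have XF: "X \<in> measurable F Sx" unfolding F_def by (rule measurable_vimage_algebra1[OF Xsp])
  have gF: "(\<lambda>\<omega>. g (X \<omega>)) \<in> borel_measurable F" using gm XF by measurable
  have hF: "(\<lambda>\<omega>. h (X \<omega>)) \<in> borel_measurable F" using h(1) XF by measurable
  have bI: "bdd_rv M (\<lambda>\<omega>. indicator {..y} (V \<omega>))"
    unfolding bdd_rv_def using V by (auto intro!: exI[of _ 1] simp: indicator_def)
  have bg: "bdd_rv M (\<lambda>\<omega>. g (X \<omega>))" by (rule bdd_rv_compose[OF X gm gb])
  have bh: "bdd_rv M (\<lambda>\<omega>. h (X \<omega>))" by (rule bdd_rv_compose[OF X h])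
  have ae: "AE x in M. real_cond_exp M F (\<lambda>\<omega>. indicator {..y} (V \<omega>)) x = g (X x)"
  proof (rule fs.real_cond_exp_charact)
    fix A assume "A \<in> sets F"
    then obtain C where C: "C \<in> sets Sx" "A = X -` C \<inter> space M"
      unfolding F_def sets_vimage_algebra2[OF Xsp] by auto
    have "(\<integral>x\<in>A. indicator {..y} (V x) \<partial>M) = (\<integral>\<omega>. indicator {..y} (V \<omega>) * indicator C (X \<omega>) \<partial>M :: real)"
      unfolding set_lebesgue_integral_def C(2)
      by (intro Bochner_Integration.integral_cong refl) (auto simp: indicator_def)
    also have "\<dots> = (\<integral>\<omega>. g (X \<omega>) * indicator C (X \<omega>) \<partial>M)"
      using cc C(1) unfolding cond_cdf_version_def by auto
    also have "\<dots> = (\<integral>x\<in>A. g (X x) \<partial>M)"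
      unfolding set_lebesgue_integral_def C(2)
      by (intro Bochner_Integration.integral_cong refl) (auto simp: indicator_def)
    finally show "(\<integral>x\<in>A. indicator {..y} (V x) \<partial>M) = (\<integral>x\<in>A. g (X x) \<partial>M)" .
  qed (use bI bg bdd_rv_integrable gF in auto)
  have "expectation (\<lambda>\<omega>. h (X \<omega>) * indicator {..y} (V \<omega>))
      = expectation (\<lambda>\<omega>. h (X \<omega>) * real_cond_exp M F (\<lambda>\<omega>. indicator {..y} (V \<omega>)) \<omega>)"
    by (rule fs.real_cond_exp_intg(2)[symmetric])
       (use bI bh bdd_rv_mult bdd_rv_integrable hF V in auto)
  also have "\<dots> = expectation (\<lambda>\<omega>. h (X \<omega>) * g (X \<omega>))"
    using bh bg ae unfolding bdd_rv_def by (intro integral_cong_AE) auto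
  finally show ?thesis .
qed

end

context prob_space begin

lemma cdf_bounds:
  assumes X: "X \<in> measurable M Sx" and V: "V \<in> borel_measurable M"
    and cc: "cond_cdf_version M Sx X V y g"
  shows "AE \<omega> in M. 0 \<le> g (X \<omega>) \<and> g (X \<omega>) \<le> 1"
proof -
  have gm: "g \<in> borel_measurable Sx" and gi: "integrable M (\<lambda>\<omega>. g (X \<omega>))"
    and eq: "\<And>A. A \<in> sets Sx \<Longrightarrow> (\<integral>\<omega>. indicator {..y} (V \<omega>) * indicator A (X \<omega>) \<partial>M)
                  = (\<integral>\<omega>. g (X \<omega>) * indicator A (X \<omega>) \<partial>M)"
    using cc unfolding cond_cdf_version_def by auto
  have intA: "\<And>A. A \<in> sets Sx \<Longrightarrow> integrable M (\<lambda>\<omega>. g (X \<omega>) * indicator A (X \<omega>))"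
    by (rule Bochner_Integration.integrable_bound[OF gi]) (use gm X in \<open>auto simp: indicator_def\<close>)
  have intI: "\<And>A. A \<in> sets Sx \<Longrightarrow> integrable M (\<lambda>\<omega>. indicator A (X \<omega>) :: real)"
    using X by (intro integrable_const_bound[where B=1]) auto
  define A where "A = {x\<in>space Sx. g x < 0}"
  have A: "A \<in> sets Sx" unfolding A_def using gm by measurable
  have "0 \<le> (\<integral>\<omega>. indicator {..y} (V \<omega>) * indicator A (X \<omega>) \<partial>M :: real)"
    by (intro Bochner_Integration.integral_nonneg) (auto simp: indicator_def)
  then have "(\<integral>\<omega>. - (g (X \<omega>) * indicator A (X \<omega>)) \<partial>M) \<le> 0"
    using eq[OF A] by simp
  moreover have "0 \<le> (\<integral>\<omega>. - (g (X \<omega>) * indicator A (X \<omega>)) \<partial>M)"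
    by (intro Bochner_Integration.integral_nonneg) (auto simp: indicator_def A_def)
  ultimately have "(\<integral>\<omega>. - (g (X \<omega>) * indicator A (X \<omega>)) \<partial>M) = 0" by linarith
  then have ae1: "AE \<omega> in M. - (g (X \<omega>) * indicator A (X \<omega>)) = 0"
    using intA[OF A] by (subst (asm) integral_nonneg_eq_0_iff_AE) (auto simp: indicator_def A_def)
  define B where "B = {x\<in>space Sx. 1 < g x}"
  have B: "B \<in> sets Sx" unfolding B_def using gm by measurable
  have mIB: "(\<lambda>\<omega>. indicator {..y} (V \<omega>) * indicator B (X \<omega>) :: real) \<in> borel_measurable M"
    using V X B by measurable
  have "(\<integral>\<omega>. (g (X \<omega>) - 1) * indicator B (X \<omega>) \<partial>M)
      = (\<integral>\<omega>. g (X \<omega>) * indicator B (X \<omega>) - indicator B (X \<omega>) \<partial>M)"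
    by (simp add: algebra_simps)
  also have "\<dots> = (\<integral>\<omega>. g (X \<omega>) * indicator B (X \<omega>) \<partial>M) - (\<integral>\<omega>. indicator B (X \<omega>) \<partial>M)"
    using intA[OF B] intI[OF B] by simp
  also have "\<dots> = (\<integral>\<omega>. indicator {..y} (V \<omega>) * indicator B (X \<omega>) - indicator B (X \<omega>) \<partial>M)"
    using eq[OF B] intI[OF B] mIB
    by (subst Bochner_Integration.integral_diff)
       (auto intro!: Bochner_Integration.integrable_bound[OF intI[OF B]] simp: indicator_def)
  also have "\<dots> = - (\<integral>\<omega>. indicator B (X \<omega>) - indicator {..y} (V \<omega>) * indicator B (X \<omega>) \<partial>M)"
    by (subst integral_minus[symmetric]) (simp add: algebra_simps)
  also have "\<dots> \<le> 0"
    by (simp, intro Bochner_Integration.integral_nonneg) (auto simp: indicator_def)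
  finally have le: "(\<integral>\<omega>. (g (X \<omega>) - 1) * indicator B (X \<omega>) \<partial>M) \<le> 0" .
  have intB: "integrable M (\<lambda>\<omega>. (g (X \<omega>) - 1) * indicator B (X \<omega>))"
    using intA[OF B] intI[OF B] by (simp add: left_diff_distrib)
  have "0 \<le> (\<integral>\<omega>. (g (X \<omega>) - 1) * indicator B (X \<omega>) \<partial>M)"
    by (intro Bochner_Integration.integral_nonneg) (auto simp: indicator_def B_def)
  then have "(\<integral>\<omega>. (g (X \<omega>) - 1) * indicator B (X \<omega>) \<partial>M) = 0" using le by linarith
  then have ae2: "AE \<omega> in M. (g (X \<omega>) - 1) * indicator B (X \<omega>) = 0"
    using intB by (subst (asm) integral_nonneg_eq_0_iff_AE) (auto simp: indicator_def B_def)
  show ?thesis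
    using ae1 ae2 AE_space
  proof eventually_elim
    case (elim \<omega>)
    then have "X \<omega> \<in> space Sx" using measurable_space[OF X] by auto
    then show ?case using elim unfolding A_def B_def
      by (cases "g (X \<omega>) < 0"; cases "1 < g (X \<omega>)") (auto simp: indicator_def)
  qed
qed

lemma cdf_clip:
  assumes X: "X \<in> measurable M Sx" and V: "V \<in> borel_measurable M"
    and cc: "cond_cdf_version M Sx X V y g"
  shows "cond_cdf_version M Sx X V y (\<lambda>x. max 0 (min 1 (g x)))"
    and "AE \<omega> in M. g (X \<omega>) = max 0 (min 1 (g (X \<omega>)))"
proof -
  have gm: "g \<in> borel_measurable Sx" and gi: "integrable M (\<lambda>\<omega>. g (X \<omega>))"
    and eq: "\<And>A. A \<in> sets Sx \<Longrightarrow> (\<integral>\<omega>. indicator {..y} (V \<omega>) * indicator A (X \<omega>) \<partial>M)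
                  = (\<integral>\<omega>. g (X \<omega>) * indicator A (X \<omega>) \<partial>M)"
    using cc unfolding cond_cdf_version_def by auto
  show ae: "AE \<omega> in M. g (X \<omega>) = max 0 (min 1 (g (X \<omega>)))"
    using cdf_bounds[OF X V cc] by eventually_elim auto
  have m: "(\<lambda>x. max 0 (min 1 (g x))) \<in> borel_measurable Sx" using gm by measurable
  have i: "integrable M (\<lambda>\<omega>. max 0 (min 1 (g (X \<omega>))))"
    using m X by (intro integrable_const_bound[where B=1]) auto
  have "\<forall>A\<in>sets Sx. (\<integral>\<omega>. indicator {..y} (V \<omega>) * indicator A (X \<omega>) \<partial>M)
                  = (\<integral>\<omega>. max 0 (min 1 (g (X \<omega>))) * indicator A (X \<omega>) \<partial>M)"
  proof
    fix A assume A: "A \<in> sets Sx"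
    have "(\<integral>\<omega>. g (X \<omega>) * indicator A (X \<omega>) \<partial>M) = (\<integral>\<omega>. max 0 (min 1 (g (X \<omega>))) * indicator A (X \<omega>) \<partial>M)"
      apply (rule integral_cong_AE)
      using gm m X A apply measurable
      using ae by eventually_elim simp
    then show "(\<integral>\<omega>. indicator {..y} (V \<omega>) * indicator A (X \<omega>) \<partial>M)
                  = (\<integral>\<omega>. max 0 (min 1 (g (X \<omega>))) * indicator A (X \<omega>) \<partial>M)"
      using eq[OF A] by simp
  qed
  then show "cond_cdf_version M Sx X V y (\<lambda>x. max 0 (min 1 (g x)))"
    unfolding cond_cdf_version_def using m i by auto
qed

end

lemma n_arm_sum_nat: "(\<Sum>w\<in>(UNIV::'w::finite set). n_arm a n w) = n"
proof -
  have "(\<Sum>w\<in>(UNIV::'w set). n_arm a n w) = card (\<Union>w\<in>UNIV. {i. i < n \<and> a n i = w})"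
    unfolding n_arm_def by (rule card_UN_disjoint[symmetric]) auto
  also have "(\<Union>w\<in>UNIV. {i. i < n \<and> a n i = w}) = {..<n}" by auto
  finally show ?thesis by simp
qed

lemma n_arm_sum: "(\<Sum>w\<in>(UNIV::'w::finite set). real (n_arm a n w)) = real n"
  using n_arm_sum_nat[of a n] by (metis of_nat_sum)

lemma ss_sum:
  fixes a :: "nat \<Rightarrow> nat \<Rightarrow> 'w"
  shows "(\<Sum>i<n. (if a n i = w then 1 / real (n_arm a n w) else 0) * (if a n i = w' then 1 / real (n_arm a n w') else 0))
       = (if w = w' then 1 / real (n_arm a n w) else 0)"
proof (cases "w = w'")
  case True
  have "(\<Sum>i<n. (if a n i = w then 1 / real (n_arm a n w) else 0) * (if a n i = w then 1 / real (n_arm a n w) else 0))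
      = (\<Sum>i\<in>{i\<in>{..<n}. a n i = w}. (1 / real (n_arm a n w))^2)"
    by (subst sum.inter_filter) (auto intro!: sum.cong simp: power2_eq_square)
  also have "\<dots> = real (n_arm a n w) * (1 / real (n_arm a n w))^2"
    unfolding n_arm_def by (simp add: conj_commute)
  also have "\<dots> = 1 / real (n_arm a n w)"
    by (simp add: power2_eq_square)
  finally show ?thesis unfolding True[symmetric] by simp
next
  case False
  then show ?thesis by (auto intro!: sum.neutral)
qed

lemma lin_bound:
  fixes c d u v :: real
  assumes "\<bar>u\<bar> \<le> 1" "\<bar>v\<bar> \<le> 1"
  shows "\<bar>c * u + d * v\<bar> \<le> \<bar>c\<bar> + \<bar>d\<bar>"
proof -
  have "\<bar>c * u\<bar> \<le> \<bar>c\<bar>" using assms(1) by (simp add: abs_mult mult_left_le)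
  moreover have "\<bar>d * v\<bar> \<le> \<bar>d\<bar>" using assms(2) by (simp add: abs_mult mult_left_le)
  ultimately show ?thesis by linarith
qed

definition clipg :: "('w \<Rightarrow> real \<Rightarrow> 'x \<Rightarrow> real) \<Rightarrow> 'w \<Rightarrow> real \<Rightarrow> 'x \<Rightarrow> real" where
  "clipg \<gamma> w y x = max 0 (min 1 (\<gamma> w y x))"

definition Gmat :: "'a measure \<Rightarrow> (nat \<Rightarrow> 'a \<Rightarrow> 'x) \<Rightarrow> ('w \<Rightarrow> real \<Rightarrow> 'x \<Rightarrow> real) \<Rightarrow> real \<Rightarrow> 'w \<Rightarrow> 'w \<Rightarrow> real" where
  "Gmat M X \<gamma> y w w' = covariance M (\<lambda>\<omega>. clipg \<gamma> w y (X 0 \<omega>)) (\<lambda>\<omega>. clipg \<gamma> w' y (X 0 \<omega>))"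

context prob_space begin

lemma cov_formula:
  fixes X :: "nat \<Rightarrow> 'a \<Rightarrow> 'x" and Y :: "nat \<Rightarrow> 'w::finite \<Rightarrow> 'a \<Rightarrow> real"
    and a :: "nat \<Rightarrow> nat \<Rightarrow> 'w" and \<gamma> :: "'w \<Rightarrow> real \<Rightarrow> 'x \<Rightarrow> real" and y :: real
  assumes Xm: "\<forall>i. X i \<in> measurable M Sx"
    and Ym: "\<forall>i w. Y i w \<in> borel_measurable M"
    and ind: "indep_vars (\<lambda>_. Sx \<Otimes>\<^sub>M (\<Pi>\<^sub>M w\<in>UNIV. borel)) (\<lambda>i \<omega>. (X i \<omega>, \<lambda>w. Y i w \<omega>)) UNIV"
    and dist: "\<forall>i. distr M (Sx \<Otimes>\<^sub>M (\<Pi>\<^sub>M w\<in>UNIV. borel)) (\<lambda>\<omega>. (X i \<omega>, \<lambda>w. Y i w \<omega>))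
           = distr M (Sx \<Otimes>\<^sub>M (\<Pi>\<^sub>M w\<in>UNIV. borel)) (\<lambda>\<omega>. (X 0 \<omega>, \<lambda>w. Y 0 w \<omega>))"
    and cc: "\<forall>i w y'. cond_cdf_version M Sx (X i) (Y i w) y' (\<gamma> w y')"
  shows "covariance M (F_simple Y a y n w) (F_simple Y a y n w')
           - covariance M (F_tilde X Y a \<gamma> y n w) (F_tilde X Y a \<gamma> y n w')
         = (if w = w' then Gmat M X \<gamma> y w w / real (n_arm a n w) else 0) - Gmat M X \<gamma> y w w' / real n"
proof -
  define S where "S = Sx \<Otimes>\<^sub>M (\<Pi>\<^sub>M w\<in>(UNIV::'w set). (borel::real measure))"
  define Z where "Z = (\<lambda>i \<omega>. (X i \<omega>, \<lambda>w. Y i w \<omega>))"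
  define \<psi> where "\<psi> = (\<lambda>w x. clipg \<gamma> w y x)"
  define phi where "phi = (\<lambda>w (p::'x \<times> ('w \<Rightarrow> real)). indicator {..y} (snd p w) :: real)"
  define psp where "psp = (\<lambda>w (p::'x \<times> ('w \<Rightarrow> real)). \<psi> w (fst p))"
  define s where "s = (\<lambda>w i. if a n i = w then 1 / real (n_arm a n w) else 0)"
  have Zm: "\<And>i. Z i \<in> measurable M S" using ind unfolding indep_vars_def S_def Z_def by auto
  have ind': "indep_vars (\<lambda>_. S) Z UNIV" using ind unfolding S_def Z_def .
  have dist': "\<And>i. distr M S (Z i) = distr M S (Z 0)" using dist unfolding S_def Z_def by auto
  have gm: "\<And>w. \<gamma> w y \<in> borel_measurable Sx" using cc unfolding cond_cdf_version_def by auto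
  have \<psi>m: "\<And>w. \<psi> w \<in> borel_measurable Sx" unfolding \<psi>_def clipg_def using gm by measurable
  have phim: "\<And>w. phi w \<in> borel_measurable S" unfolding phi_def S_def by measurable
  have pspm: "\<And>w. psp w \<in> borel_measurable S" unfolding psp_def S_def using \<psi>m by measurable
  have phib: "\<And>w p. \<bar>phi w p\<bar> \<le> 1" unfolding phi_def by (auto simp: indicator_def)
  have pspb: "\<And>w p. \<bar>psp w p\<bar> \<le> 1" unfolding psp_def \<psi>_def clipg_def by auto
  have bphi: "\<And>w. bdd_rv M (\<lambda>\<omega>. phi w (Z 0 \<omega>))" using bdd_rv_compose[OF Zm phim phib] .
  have bpsp: "\<And>w. bdd_rv M (\<lambda>\<omega>. psp w (Z 0 \<omega>))" using bdd_rv_compose[OF Zm pspm pspb] .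
  have simple_eq: "\<And>w. F_simple Y a y n w = (\<lambda>\<omega>. \<Sum>i<n. s w i * phi w (Z i \<omega>))"
  proof (rule ext)
    fix w \<omega>
    have "F_simple Y a y n w \<omega> = (1 / real (n_arm a n w)) * (\<Sum>i\<in>{i\<in>{..<n}. a n i = w}. indicator {..y} (Y i w \<omega>))"
      unfolding F_simple_def by (intro arg_cong2[where f="(*)"] sum.cong) auto
    also have "\<dots> = (\<Sum>i<n. s w i * phi w (Z i \<omega>))"
      by (subst sum.inter_filter, simp, subst sum_distrib_left, rule sum.cong[OF refl]) (simp add: s_def phi_def Z_def)
    finally show "F_simple Y a y n w \<omega> = (\<Sum>i<n. s w i * phi w (Z i \<omega>))" .
  qed
  have tilde_AE: "\<And>w. AE \<omega> in M. F_tilde X Y a \<gamma> y n w \<omega>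
       = (\<Sum>i<n. s w i * phi w (Z i \<omega>) + (1 / real n - s w i) * psp w (Z i \<omega>))"
  proof -
    fix w
    have "\<forall>i. AE \<omega> in M. \<gamma> w y (X i \<omega>) = \<psi> w (X i \<omega>)"
      using cdf_clip(2) Xm Ym cc unfolding \<psi>_def clipg_def by blast
    then have "AE \<omega> in M. \<forall>i. \<gamma> w y (X i \<omega>) = \<psi> w (X i \<omega>)"
      by (simp add: AE_all_countable)
    then show "AE \<omega> in M. F_tilde X Y a \<gamma> y n w \<omega>
       = (\<Sum>i<n. s w i * phi w (Z i \<omega>) + (1 / real n - s w i) * psp w (Z i \<omega>))"
    proof eventually_elim
      case (elim \<omega>)
      have "F_tilde X Y a \<gamma> y n w \<omega> = (1 / real (n_arm a n w)) *
         (\<Sum>i\<in>{i\<in>{..<n}. a n i = w}. indicator {..y} (Y i w \<omega>) - \<psi> w (X i \<omega>))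
         + (1 / real n) * (\<Sum>i<n. \<psi> w (X i \<omega>))"
        unfolding F_tilde_def using elim by (intro arg_cong2[where f="(+)"] arg_cong2[where f="(*)"] sum.cong) auto
      also have "\<dots> = (\<Sum>i<n. s w i * (phi w (Z i \<omega>) - psp w (Z i \<omega>))) + (\<Sum>i<n. (1 / real n) * psp w (Z i \<omega>))"
        by (subst sum.inter_filter, simp, subst sum_distrib_left, rule arg_cong2[where f="(+)"], rule sum.cong[OF refl])
           (simp_all add: s_def phi_def psp_def Z_def sum_distrib_left)
      also have "\<dots> = (\<Sum>i<n. s w i * phi w (Z i \<omega>) + (1 / real n - s w i) * psp w (Z i \<omega>))"
        by (simp add: sum.distrib[symmetric] algebra_simps)
      finally show ?case .
    qed
  qed
  define I where "I = (\<lambda>w \<omega>. phi w (Z 0 \<omega>))"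
  define P where "P = (\<lambda>w \<omega>. psp w (Z 0 \<omega>))"
  have bI: "\<And>w. bdd_rv M (I w)" unfolding I_def by (rule bphi)
  have bP: "\<And>w. bdd_rv M (P w)" unfolding P_def by (rule bpsp)
  have cov_s: "covariance M (F_simple Y a y n w) (F_simple Y a y n w')
      = (\<Sum>i<n. s w i * s w' i) * covariance M (I w) (I w')"
  proof -
    have "covariance M (F_simple Y a y n w) (F_simple Y a y n w')
       = (\<Sum>i<n. covariance M (\<lambda>\<omega>. s w i * phi w (Z 0 \<omega>)) (\<lambda>\<omega>. s w' i * phi w' (Z 0 \<omega>)))"
      unfolding simple_eq
      by (rule cov_units[OF ind' dist', where F="\<lambda>i p. s w i * phi w p" and G="\<lambda>i p. s w' i * phi w' p"])
         (use phim phib in \<open>auto intro!: exI[of _ "\<bar>s _ _\<bar>"] simp: abs_mult intro: mult_left_le\<close>)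
    also have "\<dots> = (\<Sum>i<n. s w i * s w' i * covariance M (I w) (I w'))"
      unfolding I_def by (intro sum.cong refl cov_scale bphi)
    finally show ?thesis by (simp add: sum_distrib_right)
  qed
  have Xm'[measurable]: "\<And>i. X i \<in> measurable M Sx" using Xm by auto
  have Ym'[measurable]: "\<And>i w. Y i w \<in> borel_measurable M" using Ym by auto
  have gm'[measurable]: "\<And>w. \<gamma> w y \<in> borel_measurable Sx" by (rule gm)
  have Ftm: "\<And>w. F_tilde X Y a \<gamma> y n w \<in> borel_measurable M"
    unfolding F_tilde_def by measurable
  have sumb: "\<And>w. (\<lambda>\<omega>. \<Sum>i<n. s w i * phi w (Z i \<omega>) + (1 / real n - s w i) * psp w (Z i \<omega>)) \<in> borel_measurable M"
    using Zm phim pspm by measurable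
  have cov_t: "covariance M (F_tilde X Y a \<gamma> y n w) (F_tilde X Y a \<gamma> y n w')
      = (\<Sum>i<n. s w i * s w' i * covariance M (I w) (I w') + s w i * (1 / real n - s w' i) * covariance M (I w) (P w')
           + (1 / real n - s w i) * s w' i * covariance M (P w) (I w') + (1 / real n - s w i) * (1 / real n - s w' i) * covariance M (P w) (P w'))"
  proof -
    have "covariance M (F_tilde X Y a \<gamma> y n w) (F_tilde X Y a \<gamma> y n w')
      = covariance M (\<lambda>\<omega>. \<Sum>i<n. s w i * phi w (Z i \<omega>) + (1 / real n - s w i) * psp w (Z i \<omega>))
                     (\<lambda>\<omega>. \<Sum>i<n. s w' i * phi w' (Z i \<omega>) + (1 / real n - s w' i) * psp w' (Z i \<omega>))"
      by (rule cov_cong_AE[OF Ftm sumb Ftm sumb tilde_AE tilde_AE])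
    also have "\<dots> = (\<Sum>i<n. covariance M (\<lambda>\<omega>. s w i * phi w (Z 0 \<omega>) + (1 / real n - s w i) * psp w (Z 0 \<omega>))
                     (\<lambda>\<omega>. s w' i * phi w' (Z 0 \<omega>) + (1 / real n - s w' i) * psp w' (Z 0 \<omega>)))"
      by (rule cov_units[OF ind' dist', where F="\<lambda>i p. s w i * phi w p + (1 / real n - s w i) * psp w p"
            and G="\<lambda>i p. s w' i * phi w' p + (1 / real n - s w' i) * psp w' p"])
         (use phim pspm in \<open>auto intro!: exI lin_bound phib pspb\<close>)
    also have "\<dots> = (\<Sum>i<n. s w i * s w' i * covariance M (I w) (I w') + s w i * (1 / real n - s w' i) * covariance M (I w) (P w')
           + (1 / real n - s w i) * s w' i * covariance M (P w) (I w') + (1 / real n - s w i) * (1 / real n - s w' i) * covariance M (P w) (P w'))"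
      unfolding I_def P_def by (intro sum.cong refl cov_lin2 bphi bpsp)
    finally show ?thesis .
  qed
  have Ieq: "\<And>w. I w = (\<lambda>\<omega>. indicator {..y} (Y 0 w \<omega>))" unfolding I_def phi_def Z_def by auto
  have Peq: "\<And>w. P w = (\<lambda>\<omega>. \<psi> w (X 0 \<omega>))" unfolding P_def psp_def Z_def by auto
  have PP: "\<And>w w'. covariance M (P w) (P w') = Gmat M X \<gamma> y w w'"
    unfolding Peq Gmat_def \<psi>_def ..
  have cc': "\<And>w. cond_cdf_version M Sx (X 0) (Y 0 w) y (\<psi> w)"
    unfolding \<psi>_def clipg_def using cdf_clip(1) Xm Ym cc by blast
  have \<psi>b: "\<And>w x. \<bar>\<psi> w x\<bar> \<le> 1" unfolding \<psi>_def clipg_def by auto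
  have orth: "\<And>w h B. h \<in> borel_measurable Sx \<Longrightarrow> (\<And>x. x \<in> space Sx \<Longrightarrow> \<bar>h x\<bar> \<le> B) \<Longrightarrow>
      expectation (\<lambda>\<omega>. h (X 0 \<omega>) * indicator {..y} (Y 0 w \<omega>)) = expectation (\<lambda>\<omega>. h (X 0 \<omega>) * \<psi> w (X 0 \<omega>))"
    by (rule cond_orth[OF Xm'[of 0] Ym'[of 0] cc' \<psi>b])
  have EI: "\<And>w. expectation (I w) = expectation (P w)"
    using orth[of "\<lambda>_. 1" 1] unfolding Ieq Peq by simp
  have IP: "\<And>w w'. covariance M (I w) (P w') = Gmat M X \<gamma> y w w'"
  proof -
    fix w w'
    have "expectation (\<lambda>\<omega>. I w \<omega> * P w' \<omega>) = expectation (\<lambda>\<omega>. P w \<omega> * P w' \<omega>)"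
      using orth[OF \<psi>m \<psi>b, of w' w] unfolding Ieq Peq by (simp add: mult.commute)
    then show "covariance M (I w) (P w') = Gmat M X \<gamma> y w w'"
      unfolding PP[symmetric] by (simp add: cov_alt bI bP EI)
  qed
  have PI: "\<And>w w'. covariance M (P w) (I w') = Gmat M X \<gamma> y w w'"
  proof -
    fix w w'
    have "covariance M (P w) (I w') = covariance M (I w') (P w)" by (rule cov_sym)
    also have "\<dots> = covariance M (P w') (P w)" by (simp add: IP PP)
    also have "\<dots> = covariance M (P w) (P w')" by (rule cov_sym)
    finally show "covariance M (P w) (I w') = Gmat M X \<gamma> y w w'" by (simp add: PP)
  qed
  define CI where "CI = covariance M (I w) (I w')"
  define G where "G = Gmat M X \<gamma> y w w'"
  have "covariance M (F_tilde X Y a \<gamma> y n w) (F_tilde X Y a \<gamma> y n w')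
      = (\<Sum>i<n. s w i * s w' i * (CI - G) + (1 / real n)^2 * G)"
    unfolding cov_t IP PI PP CI_def[symmetric] G_def[symmetric]
    by (intro sum.cong refl) (simp add: algebra_simps power2_eq_square)
  also have "\<dots> = (\<Sum>i<n. s w i * s w' i) * (CI - G) + real n * (1 / real n)^2 * G"
    by (simp add: sum.distrib sum_distrib_right)
  also have "real n * (1 / real n)^2 = 1 / real n"
    by (cases "n = 0") (simp_all add: power2_eq_square)
  finally have ct: "covariance M (F_tilde X Y a \<gamma> y n w) (F_tilde X Y a \<gamma> y n w')
      = (\<Sum>i<n. s w i * s w' i) * (CI - G) + 1 / real n * G" .
  have ss: "(\<Sum>i<n. s w i * s w' i) = (if w = w' then 1 / real (n_arm a n w) else 0)"
    unfolding s_def by (rule ss_sum)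
  show ?thesis
    unfolding cov_s ct CI_def[symmetric] ss G_def
    by (auto simp: algebra_simps)
qed

end

lemma pi_sum:
  fixes a :: "nat \<Rightarrow> nat \<Rightarrow> 'w::finite"
  assumes "\<forall>w. (\<lambda>n. real (n_arm a n w) / real n) \<longlonglongrightarrow> \<pi> w"
  shows "(\<Sum>w\<in>UNIV. \<pi> w) = 1"
proof -
  have l: "(\<lambda>n. \<Sum>w\<in>UNIV. real (n_arm a n w) / real n) \<longlonglongrightarrow> (\<Sum>w\<in>UNIV. \<pi> w)"
    using assms by (intro tendsto_sum) auto
  have ev: "\<forall>\<^sub>F n in sequentially. (\<Sum>w\<in>UNIV. real (n_arm a n w) / real n) = 1"
    using eventually_ge_at_top[of 1]
    by eventually_elim (simp add: sum_divide_distrib[symmetric] n_arm_sum)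
  have "(\<lambda>n. \<Sum>w\<in>UNIV. real (n_arm a n w) / real n) \<longlonglongrightarrow> 1"
    by (rule tendsto_eventually[OF ev])
  with l show ?thesis using LIMSEQ_unique by blast
qed

lemma ratio_lim:
  assumes "(\<lambda>n. real (n_arm a n w) / real n) \<longlonglongrightarrow> p" "p \<noteq> 0"
  shows "(\<lambda>n. real n / real (n_arm a n w)) \<longlonglongrightarrow> 1 / p"
proof -
  have "(\<lambda>n. inverse (real (n_arm a n w) / real n)) \<longlonglongrightarrow> inverse p"
    by (rule tendsto_inverse[OF assms])
  then show ?thesis by (simp add: inverse_eq_divide)
qed

lemma smallo_inv:
  fixes f :: "nat \<Rightarrow> real"
  assumes "(\<lambda>n. f n * real n) \<longlonglongrightarrow> 0"
  shows "f \<in> o(\<lambda>n. 1 / real n)"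
proof (rule smalloI_tendsto)
  show "((\<lambda>n. f n / (1 / real n)) \<longlongrightarrow> 0) at_top" using assms by simp
  show "\<forall>\<^sub>F n in at_top. 1 / real n \<noteq> 0"
    using eventually_ge_at_top[of 1] by eventually_elim auto
qed

lemma smallo_inv_D:
  fixes f :: "nat \<Rightarrow> real"
  assumes "f \<in> o(\<lambda>n. 1 / real n)"
  shows "(\<lambda>n. f n * real n) \<longlonglongrightarrow> 0"
  using smalloD_tendsto[OF assms] by simp

lemma R_small:
  assumes "(\<lambda>n. real (n_arm a n w) / real n) \<longlonglongrightarrow> p" "p \<noteq> 0"
  shows "(\<lambda>n. c * (1 / real (n_arm a n w) - 1 / (real n * p))) \<in> o(\<lambda>n. 1 / real n)"
proof (rule smallo_inv)
  have "(\<lambda>n. c * (real n / real (n_arm a n w) - 1 / p)) \<longlonglongrightarrow> c * (1 / p - 1 / p)"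
    by (intro tendsto_intros ratio_lim[OF assms])
  then have l: "(\<lambda>n. c * (real n / real (n_arm a n w) - 1 / p)) \<longlonglongrightarrow> 0" by simp
  have ev: "\<forall>\<^sub>F n in sequentially. c * (real n / real (n_arm a n w) - 1 / p) = c * (1 / real (n_arm a n w) - 1 / (real n * p)) * real n"
    using eventually_ge_at_top[of 1] by eventually_elim (simp add: field_simps)
  show "(\<lambda>n. c * (1 / real (n_arm a n w) - 1 / (real n * p)) * real n) \<longlonglongrightarrow> 0"
    by (rule Lim_transform_eventually[OF l ev])
qed

lemma diff_lim:
  assumes "(\<lambda>n. real (n_arm a n w) / real n) \<longlonglongrightarrow> p" "p \<noteq> 0"
  shows "(\<lambda>n. (c / real (n_arm a n w) - c / real n) * real n) \<longlonglongrightarrow> c * (1 / p - 1)"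
proof -
  have l: "(\<lambda>n. c * (real n / real (n_arm a n w) - 1)) \<longlonglongrightarrow> c * (1 / p - 1)"
    by (intro tendsto_intros ratio_lim[OF assms])
  have ev: "\<forall>\<^sub>F n in sequentially. c * (real n / real (n_arm a n w) - 1) = (c / real (n_arm a n w) - c / real n) * real n"
    using eventually_ge_at_top[of 1] by eventually_elim (simp add: field_simps)
  show ?thesis by (rule Lim_transform_eventually[OF l ev])
qed

lemma jensen_id:
  fixes x \<pi> :: "'w \<Rightarrow> real"
  assumes "finite I" "\<And>w. w \<in> I \<Longrightarrow> \<pi> w > 0" "(\<Sum>w\<in>I. \<pi> w) = 1"
  shows "(\<Sum>w\<in>I. (x w)\<^sup>2 / \<pi> w) - (\<Sum>w\<in>I. x w)\<^sup>2 = (\<Sum>w\<in>I. \<pi> w * (x w / \<pi> w - (\<Sum>w\<in>I. x w))\<^sup>2)"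
proof -
  define m where "m = (\<Sum>w\<in>I. x w)"
  have "(\<Sum>w\<in>I. \<pi> w * (x w / \<pi> w - m)\<^sup>2) = (\<Sum>w\<in>I. (x w)\<^sup>2 / \<pi> w - 2 * m * x w + m\<^sup>2 * \<pi> w)"
  proof (intro sum.cong refl)
    fix w assume "w \<in> I"
    then have "\<pi> w > 0" by (rule assms(2))
    then show "\<pi> w * (x w / \<pi> w - m)\<^sup>2 = (x w)\<^sup>2 / \<pi> w - 2 * m * x w + m\<^sup>2 * \<pi> w"
      by (simp add: power2_eq_square field_simps)
  qed
  also have "\<dots> = (\<Sum>w\<in>I. (x w)\<^sup>2 / \<pi> w) - 2 * m * m + m\<^sup>2 * 1"
    unfolding assms(3)[symmetric] by (simp add: sum.distrib sum_subtractf sum_distrib_left m_def)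
  finally show ?thesis unfolding m_def by (simp add: power2_eq_square)
qed

context prob_space begin

lemma quad_form:
  fixes \<Psi> :: "'w::finite \<Rightarrow> 'a \<Rightarrow> real" and v :: "real^'w"
  assumes bdd: "\<And>w. bdd_rv M (\<Psi> w)"
  shows "v \<bullet> ((\<chi> w w'. (if w = w' then covariance M (\<Psi> w) (\<Psi> w) / \<pi> w else 0) - covariance M (\<Psi> w) (\<Psi> w')) *v v)
     = expectation (\<lambda>\<omega>. (\<Sum>w\<in>UNIV. (v$w * (\<Psi> w \<omega> - expectation (\<Psi> w)))\<^sup>2 / \<pi> w)
                        - (\<Sum>w\<in>UNIV. v$w * (\<Psi> w \<omega> - expectation (\<Psi> w)))\<^sup>2)"
proof -
  define ut where "ut = (\<lambda>w \<omega>. \<Psi> w \<omega> - expectation (\<Psi> w))"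
  have but: "\<And>w. bdd_rv M (ut w)" unfolding ut_def by (intro bdd_rv_diff bdd bdd_rv_const)
  have iut: "\<And>w w'. integrable M (\<lambda>\<omega>. ut w \<omega> * ut w' \<omega>)" using but bdd_rv_mult bdd_rv_integrable by blast
  have G: "\<And>w w'. covariance M (\<Psi> w) (\<Psi> w') = expectation (\<lambda>\<omega>. ut w \<omega> * ut w' \<omega>)"
    unfolding covariance_def ut_def ..
  have lhs: "v \<bullet> ((\<chi> w w'. (if w = w' then covariance M (\<Psi> w) (\<Psi> w) / \<pi> w else 0) - covariance M (\<Psi> w) (\<Psi> w')) *v v)
     = (\<Sum>w\<in>UNIV. (v$w)\<^sup>2 / \<pi> w * expectation (\<lambda>\<omega>. ut w \<omega> * ut w \<omega>))
       - (\<Sum>w\<in>UNIV. \<Sum>w'\<in>UNIV. v$w * v$w' * expectation (\<lambda>\<omega>. ut w \<omega> * ut w' \<omega>))"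
  proof -
    have row: "\<And>w. (\<Sum>w'\<in>UNIV. ((if w = w' then covariance M (\<Psi> w) (\<Psi> w) / \<pi> w else 0) - covariance M (\<Psi> w) (\<Psi> w')) * v$w')
       = covariance M (\<Psi> w) (\<Psi> w) / \<pi> w * v$w - (\<Sum>w'\<in>UNIV. covariance M (\<Psi> w) (\<Psi> w') * v$w')"
    proof -
      fix w
      have "(\<Sum>w'\<in>UNIV. ((if w = w' then covariance M (\<Psi> w) (\<Psi> w) / \<pi> w else 0) - covariance M (\<Psi> w) (\<Psi> w')) * v$w')
        = (\<Sum>w'\<in>UNIV. (if w = w' then covariance M (\<Psi> w) (\<Psi> w) / \<pi> w * v$w' else 0)) - (\<Sum>w'\<in>UNIV. covariance M (\<Psi> w) (\<Psi> w') * v$w')"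
        unfolding left_diff_distrib sum_subtractf by (rule arg_cong2[where f="(-)"], rule sum.cong) auto
      also have "(\<Sum>w'\<in>UNIV. (if w = w' then covariance M (\<Psi> w) (\<Psi> w) / \<pi> w * v$w' else 0)) = covariance M (\<Psi> w) (\<Psi> w) / \<pi> w * v$w"
        by (simp add: sum.delta')
      finally show "?thesis w" .
    qed
    have mv: "\<And>w. ((\<chi> w w'. (if w = w' then covariance M (\<Psi> w) (\<Psi> w) / \<pi> w else 0) - covariance M (\<Psi> w) (\<Psi> w')) *v v) $ w
       = covariance M (\<Psi> w) (\<Psi> w) / \<pi> w * v$w - (\<Sum>w'\<in>UNIV. covariance M (\<Psi> w) (\<Psi> w') * v$w')"
      unfolding matrix_vector_mult_def vec_lambda_beta row ..
    show ?thesis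
      unfolding inner_vec_def inner_real_def mv unfolding G
      by (simp add: right_diff_distrib sum_subtractf sum_distrib_left power2_eq_square algebra_simps)
  qed
  have "expectation (\<lambda>\<omega>. (\<Sum>w\<in>UNIV. (v$w * ut w \<omega>)\<^sup>2 / \<pi> w) - (\<Sum>w\<in>UNIV. v$w * ut w \<omega>)\<^sup>2)
     = expectation (\<lambda>\<omega>. (\<Sum>w\<in>UNIV. (v$w)\<^sup>2 / \<pi> w * (ut w \<omega> * ut w \<omega>))
                        - (\<Sum>w\<in>UNIV. \<Sum>w'\<in>UNIV. v$w * v$w' * (ut w \<omega> * ut w' \<omega>)))"
    by (simp add: power2_eq_square sum_product algebra_simps)
  also have "\<dots> = (\<Sum>w\<in>UNIV. (v$w)\<^sup>2 / \<pi> w * expectation (\<lambda>\<omega>. ut w \<omega> * ut w \<omega>))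
       - (\<Sum>w\<in>UNIV. \<Sum>w'\<in>UNIV. v$w * v$w' * expectation (\<lambda>\<omega>. ut w \<omega> * ut w' \<omega>))"
    using iut by (simp add: Bochner_Integration.integral_diff Bochner_Integration.integral_sum integrable_sum)
  finally show ?thesis unfolding lhs ut_def by (rule sym)
qed

end

lemma pd_uniform:
  fixes A :: "real^'n::finite^'n"
  assumes pos: "\<And>v. v \<noteq> 0 \<Longrightarrow> 0 < v \<bullet> (A *v v)"
  shows "\<exists>c>0. \<forall>v. c * (v \<bullet> v) \<le> v \<bullet> (A *v v)"
proof -
  have cont: "continuous_on (sphere 0 1) (\<lambda>v::real^'n. v \<bullet> (A *v v))"
    by (intro continuous_intros)
  obtain v0 where v0: "v0 \<in> sphere 0 1" and mn: "\<And>u. u \<in> sphere 0 1 \<Longrightarrow> v0 \<bullet> (A *v v0) \<le> u \<bullet> (A *v u)"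
    using continuous_attains_inf[OF compact_sphere _ cont] by auto
  have "v0 \<noteq> 0" using v0 by auto
  then have cpos: "0 < v0 \<bullet> (A *v v0)" by (rule pos)
  have hom: "\<And>t u. (t *\<^sub>R u) \<bullet> (A *v (t *\<^sub>R u)) = t\<^sup>2 * (u \<bullet> (A *v u))"
    by (simp add: matrix_vector_mult_scaleR power2_eq_square)
  show ?thesis
  proof (intro exI[of _ "v0 \<bullet> (A *v v0)"] conjI allI cpos)
    fix v :: "real^'n"
    show "(v0 \<bullet> (A *v v0)) * (v \<bullet> v) \<le> v \<bullet> (A *v v)"
    proof (cases "v = 0")
      case False
      define u where "u = (1 / norm v) *\<^sub>R v"
      have u: "u \<in> sphere 0 1" using False unfolding u_def by auto
      have v: "v = norm v *\<^sub>R u" using False unfolding u_def by auto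
      have "v \<bullet> (A *v v) = (norm v)\<^sup>2 * (u \<bullet> (A *v u))" by (subst v, subst v, rule hom)
      moreover have "v \<bullet> v = (norm v)\<^sup>2" by (simp add: power2_norm_eq_inner)
      ultimately show ?thesis using mn[OF u] by (metis mult.commute mult_left_mono zero_le_power2)
    qed simp
  qed
qed

context prob_space begin

lemma quad_nonneg_pos:
  fixes \<Psi> :: "'w::finite \<Rightarrow> 'a \<Rightarrow> real" and v :: "real^'w" and \<pi> :: "'w \<Rightarrow> real"
  assumes bdd: "\<And>w. bdd_rv M (\<Psi> w)" and pipos: "\<And>w. \<pi> w > 0" and pisum: "(\<Sum>w\<in>UNIV. \<pi> w) = 1"
  shows "0 \<le> v \<bullet> ((\<chi> w w'. (if w = w' then covariance M (\<Psi> w) (\<Psi> w) / \<pi> w else 0) - covariance M (\<Psi> w) (\<Psi> w')) *v v)"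
    and "(\<forall>w w' r. w \<noteq> w' \<longrightarrow> Var M (\<lambda>\<omega>. \<Psi> w \<omega> - r * \<Psi> w' \<omega>) > 0) \<Longrightarrow> (\<And>w::'w. \<exists>w'. w' \<noteq> w) \<Longrightarrow> v \<noteq> 0 \<Longrightarrow>
      0 < v \<bullet> ((\<chi> w w'. (if w = w' then covariance M (\<Psi> w) (\<Psi> w) / \<pi> w else 0) - covariance M (\<Psi> w) (\<Psi> w')) *v v)"
proof -
  define ut where "ut = (\<lambda>w \<omega>. \<Psi> w \<omega> - expectation (\<Psi> w))"
  have but: "\<And>w. bdd_rv M (ut w)" unfolding ut_def by (intro bdd_rv_diff bdd bdd_rv_const)
  define x where "x = (\<lambda>\<omega> w. v$w * ut w \<omega>)"
  define Q where "Q = (\<lambda>\<omega>. (\<Sum>w\<in>UNIV. (x \<omega> w)\<^sup>2 / \<pi> w) - (\<Sum>w\<in>UNIV. x \<omega> w)\<^sup>2)"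
  have qf: "v \<bullet> ((\<chi> w w'. (if w = w' then covariance M (\<Psi> w) (\<Psi> w) / \<pi> w else 0) - covariance M (\<Psi> w) (\<Psi> w')) *v v)
     = expectation Q"
    unfolding quad_form[OF bdd] Q_def x_def ut_def ..
  have Qeq: "\<And>\<omega>. Q \<omega> = (\<Sum>w\<in>UNIV. \<pi> w * (x \<omega> w / \<pi> w - (\<Sum>w\<in>UNIV. x \<omega> w))\<^sup>2)"
    unfolding Q_def by (rule jensen_id) (use pipos pisum in auto)
  have Qnn: "\<And>\<omega>. 0 \<le> Q \<omega>" unfolding Qeq using pipos by (intro sum_nonneg mult_nonneg_nonneg) (auto intro: less_imp_le)
  have bQ: "bdd_rv M Q" unfolding Q_def x_def power2_eq_square
    by (intro bdd_rv_diff bdd_rv_sum bdd_rv_mult bdd_rv_cmult but bdd_rv_const)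
       (simp add: divide_inverse mult.commute bdd_rv_mult bdd_rv_cmult but)
  show nn: "0 \<le> v \<bullet> ((\<chi> w w'. (if w = w' then covariance M (\<Psi> w) (\<Psi> w) / \<pi> w else 0) - covariance M (\<Psi> w) (\<Psi> w')) *v v)"
    unfolding qf by (intro Bochner_Integration.integral_nonneg Qnn)
  assume hyp: "\<forall>w w' r. w \<noteq> w' \<longrightarrow> Var M (\<lambda>\<omega>. \<Psi> w \<omega> - r * \<Psi> w' \<omega>) > 0"
    and two: "\<And>w::'w. \<exists>w'. w' \<noteq> w" and vnz: "v \<noteq> 0"
  show "0 < v \<bullet> ((\<chi> w w'. (if w = w' then covariance M (\<Psi> w) (\<Psi> w) / \<pi> w else 0) - covariance M (\<Psi> w) (\<Psi> w')) *v v)"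
  proof (rule ccontr)
    assume "\<not> ?thesis"
    with nn have "expectation Q = 0" unfolding qf by linarith
    then have aeQ: "AE \<omega> in M. Q \<omega> = 0"
      using bQ bdd_rv_integrable Qnn by (subst (asm) integral_nonneg_eq_0_iff_AE) auto
    obtain w0 where w0: "v$w0 \<noteq> 0" using vnz by (auto simp: vec_eq_iff)
    obtain w1 where w1: "w1 \<noteq> w0" using two[of w0] by blast
    define r where "r = \<pi> w0 * v$w1 / (\<pi> w1 * v$w0)"
    have ae: "AE \<omega> in M. (ut w0 \<omega> - r * ut w1 \<omega>)\<^sup>2 = 0"
      using aeQ
    proof eventually_elim
      case (elim \<omega>)
      have "\<forall>w\<in>UNIV. \<pi> w * (x \<omega> w / \<pi> w - (\<Sum>w\<in>UNIV. x \<omega> w))\<^sup>2 = 0"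
      proof -
        have nt: "\<And>w. 0 \<le> \<pi> w * (x \<omega> w / \<pi> w - (\<Sum>w\<in>UNIV. x \<omega> w))\<^sup>2"
          using pipos by (simp add: less_imp_le)
        show ?thesis using elim unfolding Qeq by (subst sum_nonneg_eq_0_iff[symmetric]) (use nt in auto)
      qed
      then have "\<And>w. x \<omega> w / \<pi> w = (\<Sum>w\<in>UNIV. x \<omega> w)" using pipos
        by (metis UNIV_I less_irrefl mult_eq_0_iff power_eq_0_iff right_minus_eq)
      then have "x \<omega> w0 / \<pi> w0 = x \<omega> w1 / \<pi> w1" by metis
      then have "ut w0 \<omega> = r * ut w1 \<omega>"
        using pipos[of w0] pipos[of w1] w0 unfolding x_def r_def by (simp add: field_simps)
      then show ?case by simp
    qed
    have "Var M (\<lambda>\<omega>. \<Psi> w0 \<omega> - r * \<Psi> w1 \<omega>) = expectation (\<lambda>\<omega>. (ut w0 \<omega> - r * ut w1 \<omega>)\<^sup>2)"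
    proof -
      have e: "expectation (\<lambda>\<omega>. \<Psi> w0 \<omega> - r * \<Psi> w1 \<omega>) = expectation (\<Psi> w0) - r * expectation (\<Psi> w1)"
        using bdd bdd_rv_integrable by simp
      show ?thesis unfolding Var_def ut_def e
        by (intro arg_cong[where f="integral\<^sup>L M"] ext) (simp add: algebra_simps)
    qed
    also have "\<dots> = expectation (\<lambda>\<omega>. 0)"
    proof (rule integral_cong_AE)
      have [measurable]: "ut w0 \<in> borel_measurable M" "ut w1 \<in> borel_measurable M"
        using but unfolding bdd_rv_def by auto
      show "(\<lambda>\<omega>. (ut w0 \<omega> - r * ut w1 \<omega>)\<^sup>2) \<in> borel_measurable M" by measurable
    qed (use ae in auto)
    finally have "Var M (\<lambda>\<omega>. \<Psi> w0 \<omega> - r * \<Psi> w1 \<omega>) = 0" by simp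
    moreover have "Var M (\<lambda>\<omega>. \<Psi> w0 \<omega> - r * \<Psi> w1 \<omega>) > 0" using hyp w1 by auto
    ultimately show False by simp
  qed
qed

end

context prob_space begin

lemma Var_cong_AE:
  assumes "f \<in> borel_measurable M" "g \<in> borel_measurable M" "AE x in M. f x = g x"
  shows "Var M f = Var M g"
  unfolding Var_cov by (rule cov_cong_AE[OF assms(1,2,1,2) assms(3) assms(3)])

lemma cov_self_nonneg: "0 \<le> covariance M f f"
  unfolding covariance_def by (intro Bochner_Integration.integral_nonneg) auto

lemma psd_scaled:
  fixes B :: "real^'n::finite^'n"
  assumes "\<And>v. 0 \<le> v \<bullet> (B *v v)" "0 \<le> t"
  shows "psd (t *\<^sub>R B)"
  unfolding psd_def
proof
  fix v :: "real^'n"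
  have "v \<bullet> ((t *\<^sub>R B) *v v) = t * (v \<bullet> (B *v v))"
    by (simp add: scaleR_matrix_vector_assoc[symmetric])
  then show "0 \<le> v \<bullet> ((t *\<^sub>R B) *v v)" using assms by simp
qed

end

theorem theorem4p4:
  fixes M :: "'a measure" and Sx :: "'x measure"
    and X :: "nat \<Rightarrow> 'a \<Rightarrow> 'x" and Y :: "nat \<Rightarrow> 'w::finite \<Rightarrow> 'a \<Rightarrow> real"
    and a :: "nat \<Rightarrow> nat \<Rightarrow> 'w" and \<pi> :: "'w \<Rightarrow> real"
    and \<gamma> :: "'w \<Rightarrow> real \<Rightarrow> 'x \<Rightarrow> real" and y :: real
  assumes "prob_space M"
    and "\<forall>i. X i \<in> measurable M Sx"
    and "\<forall>i w. Y i w \<in> borel_measurable M"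
    and "prob_space.indep_vars M (\<lambda>_. Sx \<Otimes>\<^sub>M (\<Pi>\<^sub>M w\<in>UNIV. borel))
           (\<lambda>i \<omega>. (X i \<omega>, \<lambda>w. Y i w \<omega>)) UNIV"
    and "\<forall>i. distr M (Sx \<Otimes>\<^sub>M (\<Pi>\<^sub>M w\<in>UNIV. borel)) (\<lambda>\<omega>. (X i \<omega>, \<lambda>w. Y i w \<omega>))
           = distr M (Sx \<Otimes>\<^sub>M (\<Pi>\<^sub>M w\<in>UNIV. borel)) (\<lambda>\<omega>. (X 0 \<omega>, \<lambda>w. Y 0 w \<omega>))"
    and "\<forall>w. 0 < \<pi> w \<and> \<pi> w < 1"
    and "\<forall>w. (\<lambda>n. real (n_arm a n w) / real n) \<longlonglongrightarrow> \<pi> w"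
    and "\<forall>i w y'. cond_cdf_version M Sx (X i) (Y i w) y' (\<gamma> w y')"
  shows
    "(\<forall>w. (\<exists>R. R \<in> o(\<lambda>n. 1 / real n) \<and>
              (\<forall>n. Var M (F_tilde X Y a \<gamma> y n w) + R n \<le> Var M (F_simple Y a y n w)))
         \<and> ((\<lambda>n. Var M (F_simple Y a y n w) - Var M (F_tilde X Y a \<gamma> y n w)) \<in> o(\<lambda>n. 1 / real n)
              \<longrightarrow> (AE \<omega> in M. \<gamma> w y (X 0 \<omega>) = measure M {\<omega>'\<in>space M. Y 0 w \<omega>' \<le> y})))
     \<and> (\<exists>R :: nat \<Rightarrow> real ^ 'w ^ 'w.
           (\<forall>w w'. (\<lambda>n. R n $ w $ w') \<in> o(\<lambda>n. 1 / real n)) \<and>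
           (\<forall>n. psd (cov_matrix M (theta_simple Y a y n)
                      - cov_matrix M (theta_tilde X Y a \<gamma> y n) - R n)))
     \<and> ((\<forall>w w' r. w \<noteq> w' \<longrightarrow> Var M (\<lambda>\<omega>. \<gamma> w y (X 0 \<omega>) - r * \<gamma> w' y (X 0 \<omega>)) > 0)
         \<longrightarrow> (\<exists>c > 0. \<exists>R :: nat \<Rightarrow> real ^ 'w ^ 'w.
               (\<forall>w w'. (\<lambda>n. R n $ w $ w') \<in> o(\<lambda>n. 1 / real n)) \<and>
               (\<forall>n. psd (cov_matrix M (theta_simple Y a y n)
                          - cov_matrix M (theta_tilde X Y a \<gamma> y n) - R n
                          - (c / real n) *\<^sub>R mat 1))))"
proof -
  note ps = assms(1)
  interpret prob_space M by (rule ps)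
  have Xm: "\<forall>i. X i \<in> measurable M Sx" and Ym: "\<forall>i w. Y i w \<in> borel_measurable M"
    and ind: "indep_vars (\<lambda>_. Sx \<Otimes>\<^sub>M (\<Pi>\<^sub>M w\<in>UNIV. borel)) (\<lambda>i \<omega>. (X i \<omega>, \<lambda>w. Y i w \<omega>)) UNIV"
    and dist: "\<forall>i. distr M (Sx \<Otimes>\<^sub>M (\<Pi>\<^sub>M w\<in>UNIV. borel)) (\<lambda>\<omega>. (X i \<omega>, \<lambda>w. Y i w \<omega>))
           = distr M (Sx \<Otimes>\<^sub>M (\<Pi>\<^sub>M w\<in>UNIV. borel)) (\<lambda>\<omega>. (X 0 \<omega>, \<lambda>w. Y 0 w \<omega>))"
    and pib: "\<forall>w. 0 < \<pi> w \<and> \<pi> w < 1"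
    and lim: "\<forall>w. (\<lambda>n. real (n_arm a n w) / real n) \<longlonglongrightarrow> \<pi> w"
    and cc: "\<forall>i w y'. cond_cdf_version M Sx (X i) (Y i w) y' (\<gamma> w y')"
    using assms by auto
  have Xm'[measurable]: "\<And>i. X i \<in> measurable M Sx" using Xm by auto
  have Ym'[measurable]: "\<And>i w. Y i w \<in> borel_measurable M" using Ym by auto
  have gm[measurable]: "\<And>w. \<gamma> w y \<in> borel_measurable Sx" using cc unfolding cond_cdf_version_def by auto
  have CF: "\<And>n w w'. covariance M (F_simple Y a y n w) (F_simple Y a y n w')
           - covariance M (F_tilde X Y a \<gamma> y n w) (F_tilde X Y a \<gamma> y n w')
         = (if w = w' then Gmat M X \<gamma> y w w / real (n_arm a n w) else 0) - Gmat M X \<gamma> y w w' / real n"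
    by (rule cov_formula[OF Xm Ym ind dist cc])
  define \<Psi> where "\<Psi> = (\<lambda>w \<omega>. clipg \<gamma> w y (X 0 \<omega>))"
  have \<Psi>m[measurable]: "\<And>w. \<Psi> w \<in> borel_measurable M" unfolding \<Psi>_def clipg_def by measurable
  have b\<Psi>: "\<And>w. bdd_rv M (\<Psi> w)"
    unfolding bdd_rv_def using \<Psi>m by (auto intro!: exI[of _ 1] simp: \<Psi>_def clipg_def)
  have Gdef: "\<And>w w'. Gmat M X \<gamma> y w w' = covariance M (\<Psi> w) (\<Psi> w')"
    unfolding Gmat_def \<Psi>_def ..
  have Gnn: "\<And>w. 0 \<le> Gmat M X \<gamma> y w w" unfolding Gdef by (rule cov_self_nonneg)
  have pipos: "\<And>w. 0 < \<pi> w" using pib by auto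
  have pinz: "\<And>w. \<pi> w \<noteq> 0" using pipos by (metis less_irrefl)
  have pisum: "(\<Sum>w\<in>UNIV. \<pi> w) = 1" by (rule pi_sum[OF lim])
  have limw: "\<And>w. (\<lambda>n. real (n_arm a n w) / real n) \<longlonglongrightarrow> \<pi> w" using lim by auto
  have VarF: "\<And>n w. Var M (F_simple Y a y n w) - Var M (F_tilde X Y a \<gamma> y n w)
      = Gmat M X \<gamma> y w w / real (n_arm a n w) - Gmat M X \<gamma> y w w / real n"
    unfolding Var_cov using CF by simp
  define Ra where "Ra = (\<lambda>w n. Gmat M X \<gamma> y w w * (1 / real (n_arm a n w) - 1 / (real n * \<pi> w)))"
  have Ra_small: "\<And>w. Ra w \<in> o(\<lambda>n. 1 / real n)"
    unfolding Ra_def by (rule R_small[OF limw pinz])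
  have Ra_le: "\<And>w n. Ra w n \<le> Gmat M X \<gamma> y w w / real (n_arm a n w) - Gmat M X \<gamma> y w w / real n"
  proof -
    fix w n
    have "Gmat M X \<gamma> y w w * (1 / real n) \<le> Gmat M X \<gamma> y w w * (1 / (real n * \<pi> w))"
    proof (cases "n = 0")
      case False
      have "\<pi> w \<le> 1" using pib by (auto intro: less_imp_le)
      then have "real n * \<pi> w \<le> real n" by (simp add: mult_left_le)
      then have "1 / real n \<le> 1 / (real n * \<pi> w)"
        using False pipos[of w] by (intro divide_left_mono) auto
      then show ?thesis using Gnn[of w] by (rule mult_left_mono)
    qed simp
    then show "Ra w n \<le> Gmat M X \<gamma> y w w / real (n_arm a n w) - Gmat M X \<gamma> y w w / real n"
      unfolding Ra_def by (simp add: right_diff_distrib)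
  qed
  define A where "A = (\<chi> w w'. (if w = w' then covariance M (\<Psi> w) (\<Psi> w) / \<pi> w else 0) - covariance M (\<Psi> w) (\<Psi> w'))"
  have qnn: "\<And>v. 0 \<le> v \<bullet> (A *v v)" unfolding A_def by (rule quad_nonneg_pos(1)[OF b\<Psi> pipos pisum])
  define R where "R = (\<lambda>n. (\<chi> w w'. if w = w' then Ra w n else 0) :: real^'w^'w)"
  have R_small: "\<And>w w'. (\<lambda>n. R n $ w $ w') \<in> o(\<lambda>n. 1 / real n)"
  proof -
    fix w w' :: 'w
    show "(\<lambda>n. R n $ w $ w') \<in> o(\<lambda>n. 1 / real n)"
    proof (cases "w = w'")
      case True then show ?thesis unfolding R_def using Ra_small by simp
    next
      case False
      have "(\<lambda>n. (0::real)) \<in> o(\<lambda>n. 1 / real n)" by (rule smallo_inv) simp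
      then show ?thesis unfolding R_def using False by simp
    qed
  qed
  have ent: "\<And>n w w'. covariance M (F_simple Y a y n w) (F_simple Y a y n w')
       - covariance M (F_tilde X Y a \<gamma> y n w) (F_tilde X Y a \<gamma> y n w') - (if w = w' then Ra w n else 0)
     = 1 / real n * ((if w = w' then covariance M (\<Psi> w) (\<Psi> w) / \<pi> w else 0) - covariance M (\<Psi> w) (\<Psi> w'))"
  proof -
    fix n w w'
    show "?thesis n w w'"
      unfolding CF Gdef[symmetric] Ra_def using pinz[of w]
      by (cases "w = w'"; cases "n = 0") (simp_all add: field_simps)
  qed
  have Meq: "\<And>n. cov_matrix M (theta_simple Y a y n) - cov_matrix M (theta_tilde X Y a \<gamma> y n) - R n
      = (1 / real n) *\<^sub>R A"
    unfolding vec_eq_iff cov_matrix_def theta_simple_def theta_tilde_def R_def A_def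
    using ent by simp
  have partb: "\<exists>R :: nat \<Rightarrow> real ^ 'w ^ 'w.
           (\<forall>w w'. (\<lambda>n. R n $ w $ w') \<in> o(\<lambda>n. 1 / real n)) \<and>
           (\<forall>n. psd (cov_matrix M (theta_simple Y a y n)
                      - cov_matrix M (theta_tilde X Y a \<gamma> y n) - R n))"
    by (intro exI[of _ R] conjI allI R_small) (simp add: Meq psd_scaled qnn)
  have clipAE: "\<And>w. AE \<omega> in M. \<gamma> w y (X 0 \<omega>) = \<Psi> w \<omega>"
    unfolding \<Psi>_def clipg_def using cdf_clip(2) Xm Ym cc by blast
  have parta: "\<forall>w. (\<exists>R. R \<in> o(\<lambda>n. 1 / real n) \<and>
              (\<forall>n. Var M (F_tilde X Y a \<gamma> y n w) + R n \<le> Var M (F_simple Y a y n w)))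
         \<and> ((\<lambda>n. Var M (F_simple Y a y n w) - Var M (F_tilde X Y a \<gamma> y n w)) \<in> o(\<lambda>n. 1 / real n)
              \<longrightarrow> (AE \<omega> in M. \<gamma> w y (X 0 \<omega>) = measure M {\<omega>'\<in>space M. Y 0 w \<omega>' \<le> y}))"
  proof (intro allI conjI impI)
    fix w
    show "\<exists>R. R \<in> o(\<lambda>n. 1 / real n) \<and>
              (\<forall>n. Var M (F_tilde X Y a \<gamma> y n w) + R n \<le> Var M (F_simple Y a y n w))"
    proof (intro exI[of _ "Ra w"] conjI allI Ra_small)
      fix n
      show "Var M (F_tilde X Y a \<gamma> y n w) + Ra w n \<le> Var M (F_simple Y a y n w)"
        using Ra_le[of w n] VarF[of n w] by linarith
    qed
    assume h: "(\<lambda>n. Var M (F_simple Y a y n w) - Var M (F_tilde X Y a \<gamma> y n w)) \<in> o(\<lambda>n. 1 / real n)"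
    define g where "g = Gmat M X \<gamma> y w w"
    have "(\<lambda>n. g / real (n_arm a n w) - g / real n) \<in> o(\<lambda>n. 1 / real n)"
      using h unfolding VarF g_def .
    then have l1: "(\<lambda>n. (g / real (n_arm a n w) - g / real n) * real n) \<longlonglongrightarrow> 0"
      by (rule smallo_inv_D)
    have l2: "(\<lambda>n. (g / real (n_arm a n w) - g / real n) * real n) \<longlonglongrightarrow> g * (1 / \<pi> w - 1)"
      by (rule diff_lim[OF limw pinz])
    have "g * (1 / \<pi> w - 1) = 0" using LIMSEQ_unique[OF l2 l1] .
    moreover have "1 / \<pi> w - 1 > 0" using pib by (auto simp: field_simps)
    ultimately have g0: "g = 0" by (metis less_irrefl mult_eq_0_iff)
    have "Var M (\<Psi> w) = 0" using g0 unfolding g_def Gdef Var_cov .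
    then have "expectation (\<lambda>\<omega>. (\<Psi> w \<omega> - expectation (\<Psi> w))\<^sup>2) = 0" unfolding Var_def .
    then have ae0: "AE \<omega> in M. (\<Psi> w \<omega> - expectation (\<Psi> w))\<^sup>2 = 0"
      using b\<Psi>[of w] by (subst (asm) integral_nonneg_eq_0_iff_AE)
         (auto intro!: bdd_rv_integrable bdd_rv_mult bdd_rv_diff bdd_rv_const simp: power2_eq_square)
    have cc': "cond_cdf_version M Sx (X 0) (Y 0 w) y (\<lambda>x. clipg \<gamma> w y x)"
      unfolding clipg_def using cdf_clip(1) Xm Ym cc by blast
    have "expectation (\<lambda>\<omega>. 1 * indicator {..y} (Y 0 w \<omega>)) = expectation (\<lambda>\<omega>. 1 * clipg \<gamma> w y (X 0 \<omega>))"
      by (rule cond_orth[OF Xm'[of 0] Ym'[of 0] cc', of "\<lambda>_. 1" 1]) (auto simp: clipg_def)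
    then have "expectation (\<Psi> w) = expectation (\<lambda>\<omega>. indicator {..y} (Y 0 w \<omega>))"
      unfolding \<Psi>_def by simp
    also have "\<dots> = expectation (indicator {\<omega>. Y 0 w \<omega> \<le> y})"
      by (intro arg_cong[where f="integral\<^sup>L M"] ext) (simp add: indicator_def)
    also have "\<dots> = measure M {\<omega>'\<in>space M. Y 0 w \<omega>' \<le> y}"
      by (simp add: Bochner_Integration.integral_indicator Int_def conj_commute)
    finally have EP: "expectation (\<Psi> w) = measure M {\<omega>'\<in>space M. Y 0 w \<omega>' \<le> y}" .
    show "AE \<omega> in M. \<gamma> w y (X 0 \<omega>) = measure M {\<omega>'\<in>space M. Y 0 w \<omega>' \<le> y}"
      using ae0 clipAE[of w] by eventually_elim (simp add: EP)
  qed
  have partc: "(\<forall>w w' r. w \<noteq> w' \<longrightarrow> Var M (\<lambda>\<omega>. \<gamma> w y (X 0 \<omega>) - r * \<gamma> w' y (X 0 \<omega>)) > 0)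
         \<longrightarrow> (\<exists>c > 0. \<exists>R :: nat \<Rightarrow> real ^ 'w ^ 'w.
               (\<forall>w w'. (\<lambda>n. R n $ w $ w') \<in> o(\<lambda>n. 1 / real n)) \<and>
               (\<forall>n. psd (cov_matrix M (theta_simple Y a y n)
                          - cov_matrix M (theta_tilde X Y a \<gamma> y n) - R n
                          - (c / real n) *\<^sub>R mat 1)))"
  proof
    assume h: "\<forall>w w' r. w \<noteq> w' \<longrightarrow> Var M (\<lambda>\<omega>. \<gamma> w y (X 0 \<omega>) - r * \<gamma> w' y (X 0 \<omega>)) > 0"
    have h': "\<forall>w w' r. w \<noteq> w' \<longrightarrow> Var M (\<lambda>\<omega>. \<Psi> w \<omega> - r * \<Psi> w' \<omega>) > 0"
    proof (intro allI impI)
      fix w w' :: 'w and r :: real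
      assume "w \<noteq> w'"
      then have "Var M (\<lambda>\<omega>. \<gamma> w y (X 0 \<omega>) - r * \<gamma> w' y (X 0 \<omega>)) > 0" using h by auto
      moreover have "Var M (\<lambda>\<omega>. \<gamma> w y (X 0 \<omega>) - r * \<gamma> w' y (X 0 \<omega>)) = Var M (\<lambda>\<omega>. \<Psi> w \<omega> - r * \<Psi> w' \<omega>)"
        by (rule Var_cong_AE) (use clipAE[of w] clipAE[of w'] in \<open>auto elim: AE_mp\<close>)
      ultimately show "Var M (\<lambda>\<omega>. \<Psi> w \<omega> - r * \<Psi> w' \<omega>) > 0" by simp
    qed
    have two: "\<And>w::'w. \<exists>w'. w' \<noteq> w"
    proof (rule ccontr)
      fix w :: 'w
      assume "\<not> (\<exists>w'. w' \<noteq> w)"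
      then have e: "UNIV - {w} = {}" by auto
      have "(\<Sum>w\<in>UNIV. \<pi> w) = \<pi> w + (\<Sum>w\<in>UNIV - {w}. \<pi> w)" by (rule sum.remove) auto
      then have "(\<Sum>w\<in>UNIV. \<pi> w) = \<pi> w" unfolding e by simp
      then show False using pisum spec[OF pib, of w] by simp
    qed
    have pos: "\<And>v. v \<noteq> 0 \<Longrightarrow> 0 < v \<bullet> (A *v v)"
      unfolding A_def by (rule quad_nonneg_pos(2)[OF b\<Psi> pipos pisum h' two])
    obtain c where c: "c > 0" "\<And>v. c * (v \<bullet> v) \<le> v \<bullet> (A *v v)"
      using pd_uniform[OF pos] by blast
    have nn: "\<And>v. 0 \<le> v \<bullet> ((A - c *\<^sub>R mat 1) *v v)"
    proof -
      fix v :: "real^'w"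
      have "v \<bullet> ((A - c *\<^sub>R mat 1) *v v) = v \<bullet> (A *v v) - c * (v \<bullet> v)"
        by (simp add: matrix_vector_mult_diff_rdistrib scaleR_matrix_vector_assoc[symmetric] inner_diff_right)
      then show "0 \<le> v \<bullet> ((A - c *\<^sub>R mat 1) *v v)" using c(2)[of v] by simp
    qed
    have Meq2: "\<And>n. cov_matrix M (theta_simple Y a y n) - cov_matrix M (theta_tilde X Y a \<gamma> y n) - R n
        - (c / real n) *\<^sub>R mat 1 = (1 / real n) *\<^sub>R (A - c *\<^sub>R mat 1)"
      unfolding Meq by (simp add: algebra_simps)
    show "\<exists>c > 0. \<exists>R :: nat \<Rightarrow> real ^ 'w ^ 'w.
               (\<forall>w w'. (\<lambda>n. R n $ w $ w') \<in> o(\<lambda>n. 1 / real n)) \<and>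
               (\<forall>n. psd (cov_matrix M (theta_simple Y a y n)
                          - cov_matrix M (theta_tilde X Y a \<gamma> y n) - R n
                          - (c / real n) *\<^sub>R mat 1))"
      by (intro exI[of _ c] conjI c(1) exI[of _ R] allI R_small) (simp add: Meq2 psd_scaled nn)
  qed
  show ?thesis using parta partb partc by blast
qed


end
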